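(* For every choice of the distributions $P(\cdot\mid x)$, every choice of regressors $r_{v,i}:X\to[0,1]$ ($v$ internal, $2\le i\le k$), and every pair $(x,y)\in X\times Y$, $$\bigl(Q(y\mid x)-P(y\mid x)\bigr)^2\;\le\;4\,m^2\Bigl(\frac{k-1}{k}\Bigr)^2\varepsilon^2,\qquad m=\log_k n,$$ where $\varepsilon^2=\frac{1}{(k-1)m}\sum_{v\in\mathrm{path}(y)}\sum_{i=2}^{k}\bigl(r_{v,i}(x)-P_v(Y_{v,i}\mid x)\bigr)^2$ is the average squared error of the $(k-1)m$ non-trivial regressors at the nodes on the path to $y$.
   Context: Let $X$ be an arbitrary set and $Y=\{1,\dots,n\}$. For each $x\in X$, $P(\cdot\mid x)$ is a probability distribution on $Y$; for $S\subseteq Y$ write $P(S\mid x)=\sum_{y\in S}P(y\mid x)$. The $0/1$ matrices $C_{2^t}$ are defined recursively by $C_2=\begin{bmatrix}1&1\\1&0\end{bmatrix}$ and $C_{2s}=\begin{bmatrix}C_s&C_s\\ C_s&J-C_s\end{bmatrix}$, where $J$ is the all-ones $s\times s$ matrix; row $1$ of each $C_{2^t}$ is all ones. Let $k\ge 2$ be a power of $2$ and $n=k^m$ for an integer $m\ge1$. Fix a complete $k$-ary rooted tree of depth $m$ whose $n$ leaves are in one-to-one correspondence with $Y$; each internal node $v$ has children $c_1,\dots,c_k$, and $T(u)\subseteq Y$ denotes the set of labels in the subtree rooted at $u$. For a label $y$, $\mathrm{path}(y)$ is the set of internal nodes on the root-to-$y$ path, and for $v\in\mathrm{path}(y)$,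 $j_v(y)$ is the index of the child of $v$ whose subtree contains $y$. For internal $v$, $P_v(c_j\mid x)=P(T(c_j)\mid x)/P(T(v)\mid x)$ when $P(T(v)\mid x)>0$ (an arbitrary probability distribution on the children otherwise), and for a set $S$ of children $P_v(S\mid x)=\sum_{c\in S}P_v(c\mid x)$. For $i\in\{1,\dots,k\}$, $Y_{v,i}=\{c_j: C_k(i,j)=1\}$. At each internal node $v$ there are $k-1$ regressors $r_{v,i}:X\to[0,1]$, $i=2,\dots,k$, and we set $r_{v,1}\equiv1$. The node estimate is $Q_v(c_j\mid x)=2\cdot\frac1k\sum_{i=1}^k\bigl[C_k(i,j)r_{v,i}(x)+(1-C_k(i,j))(1-r_{v,i}(x))\bigr]-1$, and the overall estimate is $Q(y\mid x)=\prod_{v\in\mathrm{path}(y)}Q_v(c_{j_v(y)}\mid x)$. *)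

theory Defs
  imports Complex_Main
begin

text \<open>Conventions: all matrix/child indices are 0-based.  Cmat t is the
  2^t x 2^t matrix C_{2^t}; the paper's C_k(i,j) (1-based) is Cmat t (i-1) (j-1).
  Row 0 is the all-ones row.\<close>

fun Cmat :: "nat \<Rightarrow> nat \<Rightarrow> nat \<Rightarrow> real" where
  "Cmat 0 i j = 1"
| "Cmat (Suc t) i j = (let s = 2 ^ t in
      if i < s then (if j < s then Cmat t i j else Cmat t i (j - s))
      else (if j < s then Cmat t (i - s) j else 1 - Cmat t (i - s) (j - s)))"

text \<open>Complete k-ary tree of depth m: nodes are lists of child indices (< k)
  of length at most m; node u has children u @ [j], j < k.\<close>

definition leaves :: "nat \<Rightarrow> nat \<Rightarrow> nat list set" where
  "leaves k m = {u. length u = m \<and> (\<forall>c\<in>set u. c < k)}"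

definition internal_nodes :: "nat \<Rightarrow> nat \<Rightarrow> nat list set" where
  "internal_nodes k m = {u. length u < m \<and> (\<forall>c\<in>set u. c < k)}"

definition subtree_labels :: "nat \<Rightarrow> nat \<Rightarrow> (nat list \<Rightarrow> nat) \<Rightarrow> nat list \<Rightarrow> nat set" where
  "subtree_labels k m lab u = lab ` {w \<in> leaves k m. take (length u) w = u}"

definition leaf_of :: "nat \<Rightarrow> nat \<Rightarrow> (nat list \<Rightarrow> nat) \<Rightarrow> nat \<Rightarrow> nat list" where
  "leaf_of k m lab y = inv_into (leaves k m) lab y"

definition path_nodes :: "nat \<Rightarrow> nat \<Rightarrow> (nat list \<Rightarrow> nat) \<Rightarrow> nat \<Rightarrow> nat list set" where
  "path_nodes k m lab y = (\<lambda>d. take d (leaf_of k m lab y)) ` {..<m}"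

definition child_idx :: "nat \<Rightarrow> nat \<Rightarrow> (nat list \<Rightarrow> nat) \<Rightarrow> nat \<Rightarrow> nat list \<Rightarrow> nat" where
  "child_idx k m lab y v = leaf_of k m lab y ! length v"

definition massP :: "('x \<Rightarrow> nat \<Rightarrow> real) \<Rightarrow> 'x \<Rightarrow> nat set \<Rightarrow> real" where
  "massP P x S = (\<Sum>y\<in>S. P x y)"

text \<open>P_v(c_j|x); D x v is the arbitrary distribution on the children of v
  used when P(T(v)|x) = 0.\<close>
definition node_cond :: "nat \<Rightarrow> nat \<Rightarrow> (nat list \<Rightarrow> nat) \<Rightarrow> ('x \<Rightarrow> nat \<Rightarrow> real)
    \<Rightarrow> ('x \<Rightarrow> nat list \<Rightarrow> nat \<Rightarrow> real) \<Rightarrow> 'x \<Rightarrow> nat list \<Rightarrow> nat \<Rightarrow> real" where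
  "node_cond k m lab P D x v j =
     (if massP P x (subtree_labels k m lab v) > 0
      then massP P x (subtree_labels k m lab (v @ [j])) / massP P x (subtree_labels k m lab v)
      else D x v j)"

definition node_cond_set :: "nat \<Rightarrow> nat \<Rightarrow> (nat list \<Rightarrow> nat) \<Rightarrow> ('x \<Rightarrow> nat \<Rightarrow> real)
    \<Rightarrow> ('x \<Rightarrow> nat list \<Rightarrow> nat \<Rightarrow> real) \<Rightarrow> 'x \<Rightarrow> nat list \<Rightarrow> nat set \<Rightarrow> real" where
  "node_cond_set k m lab P D x v S = (\<Sum>j\<in>S. node_cond k m lab P D x v j)"

definition Yset :: "nat \<Rightarrow> nat \<Rightarrow> nat set" where
  "Yset t i = {j. j < 2 ^ t \<and> Cmat t i j = 1}"

text \<open>Regressors with r_{v,1} = 1 (0-based: row 0).\<close>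
definition reg :: "(nat list \<Rightarrow> nat \<Rightarrow> 'x \<Rightarrow> real) \<Rightarrow> nat list \<Rightarrow> nat \<Rightarrow> 'x \<Rightarrow> real" where
  "reg r v i x = (if i = 0 then 1 else r v i x)"

definition node_est :: "nat \<Rightarrow> (nat list \<Rightarrow> nat \<Rightarrow> 'x \<Rightarrow> real) \<Rightarrow> 'x \<Rightarrow> nat list \<Rightarrow> nat \<Rightarrow> real" where
  "node_est t r x v j =
     2 * (1 / real (2 ^ t)) * (\<Sum>i<2 ^ t. Cmat t i j * reg r v i x
                                   + (1 - Cmat t i j) * (1 - reg r v i x)) - 1"

definition est :: "nat \<Rightarrow> nat \<Rightarrow> (nat list \<Rightarrow> nat) \<Rightarrow> (nat list \<Rightarrow> nat \<Rightarrow> 'x \<Rightarrow> real)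
    \<Rightarrow> 'x \<Rightarrow> nat \<Rightarrow> real" where
  "est t m lab r x y =
     (\<Prod>v\<in>path_nodes (2 ^ t) m lab y. node_est t r x v (child_idx (2 ^ t) m lab y v))"

definition eps_sq :: "nat \<Rightarrow> nat \<Rightarrow> (nat list \<Rightarrow> nat) \<Rightarrow> ('x \<Rightarrow> nat \<Rightarrow> real)
    \<Rightarrow> ('x \<Rightarrow> nat list \<Rightarrow> nat \<Rightarrow> real) \<Rightarrow> (nat list \<Rightarrow> nat \<Rightarrow> 'x \<Rightarrow> real) \<Rightarrow> 'x \<Rightarrow> nat \<Rightarrow> real" where
  "eps_sq t m lab P D r x y =
     1 / (real (2 ^ t - 1) * real m) *
     (\<Sum>v\<in>path_nodes (2 ^ t) m lab y. \<Sum>i\<in>{1..<2 ^ t}.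
        (r v i x - node_cond_set (2 ^ t) m lab P D x v (Yset t i)) ^ 2)"

end

theory Submission imports Defs begin

lemma Cmat01: "Cmat t i j = 0 \<or> Cmat t i j = 1"
  by (induction t arbitrary: i j) (auto simp: Let_def)

lemma Cmat_row0: "Cmat t 0 j = 1"
  by (induction t arbitrary: j) (auto simp: Let_def)

lemma sum_lessThan_add: "(\<Sum>i<a+(b::nat). f i) = (\<Sum>i<a. f i) + (\<Sum>i<b. f (a+i)::real)"
  by (induction b) (auto simp: add.assoc)

definition hh :: "nat \<Rightarrow> nat \<Rightarrow> nat \<Rightarrow> real" where
  "hh t i j = 2 * Cmat t i j - 1"

lemma hh_Suc_lo: "i < 2^t \<Longrightarrow> hh (Suc t) i j = hh t i (if j < 2^t then j else j - 2^t)"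
  by (simp add: hh_def Let_def)

lemma hh_Suc_hi: "hh (Suc t) (2^t + i) j = (if j < 2^t then hh t i j else - hh t i (j - 2^t))"
  by (simp add: hh_def Let_def)

lemma hh_orth: "j < 2^t \<Longrightarrow> j' < 2^t \<Longrightarrow>
   (\<Sum>i<2^t. hh t i j * hh t i j') = (if j = j' then 2^t else 0)"
proof (induction t arbitrary: j j')
  case 0
  then show ?case by (simp add: hh_def)
next
  case (Suc t)
  let ?s = "2^t :: nat"
  have split: "(\<Sum>i<2^Suc t. hh (Suc t) i j * hh (Suc t) i j')
     = (\<Sum>i<?s. hh (Suc t) i j * hh (Suc t) i j') + (\<Sum>i<?s. hh (Suc t) (?s+i) j * hh (Suc t) (?s+i) j')"
    using sum_lessThan_add[of "\<lambda>i. hh (Suc t) i j * hh (Suc t) i j'" ?s ?s] by (simp add: mult_2)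
  have lo: "(\<Sum>i<?s. hh (Suc t) i j * hh (Suc t) i j') = (\<Sum>i<?s. hh t i (if j < ?s then j else j - ?s) * hh t i (if j' < ?s then j' else j' - ?s))"
    by (rule sum.cong) (auto simp: hh_Suc_lo)
  have hi: "(\<Sum>i<?s. hh (Suc t) (?s+i) j * hh (Suc t) (?s+i) j') = (\<Sum>i<?s. (if j < ?s then 1 else -1) * (if j' < ?s then 1 else -1) * (hh t i (if j < ?s then j else j - ?s) * hh t i (if j' < ?s then j' else j' - ?s)))"
    by (rule sum.cong) (auto simp: hh_Suc_hi)
  have jb: "(if j < ?s then j else j - ?s) < ?s" "(if j' < ?s then j' else j' - ?s) < ?s"
    using Suc.prems by auto
  note IH = Suc.IH[OF jb]
  show ?case
    unfolding split lo hi sum_distrib_left[symmetric] IH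
    using Suc.prems by (auto simp: split: if_splits)
qed


definition FF :: "nat \<Rightarrow> (nat \<Rightarrow> real) \<Rightarrow> nat \<Rightarrow> real" where
  "FF t a j = 2 * (1 / real (2 ^ t)) * (\<Sum>i<2 ^ t. Cmat t i j * a i + (1 - Cmat t i j) * (1 - a i)) - 1"

lemma FF_diff: "FF t a j - FF t b j = 2 / real (2^t) * (\<Sum>i<2^t. hh t i j * (a i - b i))"
proof -
  have "(\<Sum>i<2 ^ t. Cmat t i j * a i + (1 - Cmat t i j) * (1 - a i)) - (\<Sum>i<2 ^ t. Cmat t i j * b i + (1 - Cmat t i j) * (1 - b i))
     = (\<Sum>i<2^t. hh t i j * (a i - b i))"
    unfolding sum_subtractf[symmetric] by (rule sum.cong) (auto simp: hh_def algebra_simps)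
  moreover have "\<And>A B. 2 * (1 / real (2 ^ t)) * A - 1 - (2 * (1 / real (2 ^ t)) * B - 1) = 2 / real (2^t) * (A - B)"
    by (simp add: field_simps)
  ultimately show ?thesis unfolding FF_def by presburger
qed

lemma FF_inv:
  assumes j: "j < 2^t" and q: "(\<Sum>j<2^t. q j) = 1"
  shows "FF t (\<lambda>i. \<Sum>j'<2^t. Cmat t i j' * q j') j = q j"
proof -
  let ?K = "2^t :: nat"
  define S where "S i = (\<Sum>j'<?K. hh t i j' * q j')" for i
  have C: "Cmat t i j' = (hh t i j' + 1) / 2" for i j' by (simp add: hh_def)
  have p: "(\<Sum>j'<?K. Cmat t i j' * q j') = S i / 2 + 1/2" for i
  proof -
    have "(\<Sum>j'<?K. Cmat t i j' * q j') = (\<Sum>j'<?K. hh t i j' * q j' / 2 + q j' / 2)"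
      by (rule sum.cong) (auto simp: C field_simps)
    also have "\<dots> = S i / 2 + (\<Sum>j'<?K. q j') / 2"
      by (simp add: sum.distrib S_def sum_divide_distrib)
    finally show ?thesis using q by simp
  qed
  have tm: "Cmat t i j * (S i / 2 + 1/2) + (1 - Cmat t i j) * (1 - (S i / 2 + 1/2))
      = 1/2 + (\<Sum>j'<?K. hh t i j * hh t i j' * q j') / 2" for i
  proof -
    have "(\<Sum>j'<?K. hh t i j * hh t i j' * q j') = hh t i j * S i"
      by (simp add: S_def sum_distrib_left mult.assoc)
    then show ?thesis by (simp add: C field_simps)
  qed
  have swap: "(\<Sum>i<?K. \<Sum>j'<?K. hh t i j * hh t i j' * q j') = (\<Sum>j'<?K. q j' * (\<Sum>i<?K. hh t i j * hh t i j'))"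
    by (subst sum.swap) (simp add: sum_distrib_left mult_ac)
  also have "\<dots> = (\<Sum>j'<?K. q j' * (if j = j' then real ?K else 0))"
    by (rule sum.cong) (auto simp: hh_orth j)
  also have "\<dots> = q j * real ?K" using j by (simp add: if_distrib cong: if_cong)
  finally have sw: "(\<Sum>i<?K. \<Sum>j'<?K. hh t i j * hh t i j' * q j') = q j * real ?K" .
  have "(\<Sum>i<?K. Cmat t i j * (\<Sum>j'<?K. Cmat t i j' * q j') + (1 - Cmat t i j) * (1 - (\<Sum>j'<?K. Cmat t i j' * q j')))
       = (\<Sum>i<?K. 1/2 + (\<Sum>j'<?K. hh t i j * hh t i j' * q j') / 2)"
    using tm by (intro sum.cong) (simp_all add: p)
  also have "\<dots> = real ?K / 2 + q j * real ?K / 2"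
    by (simp add: sum.distrib sum_divide_distrib[symmetric] sw)
  finally show ?thesis unfolding FF_def by (simp add: field_simps)
qed

lemma cs: "finite A \<Longrightarrow> (\<Sum>i\<in>A. a i)^2 \<le> real (card A) * (\<Sum>i\<in>A. (a i)^2 :: real)"
proof -
  assume A: "finite A"
  have "0 \<le> (\<Sum>i\<in>A. \<Sum>j\<in>A. (a i - a j)^2)" by (intro sum_nonneg) auto
  also have "\<dots> = (\<Sum>i\<in>A. \<Sum>j\<in>A. (a i)^2 + (a j)^2 - 2 * a i * a j)"
    by (simp add: power2_diff)
  also have "\<dots> = 2 * real (card A) * (\<Sum>i\<in>A. (a i)^2) - 2 * (\<Sum>i\<in>A. a i)^2"
    by (simp add: sum_subtractf sum.distrib sum_distrib_left sum_distrib_right power2_eq_square mult_ac)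
  finally show ?thesis by simp
qed

lemma prod_abs_le1: "(\<And>e. e < (d::nat) \<Longrightarrow> \<bar>g e\<bar> \<le> (1::real)) \<Longrightarrow> \<bar>\<Prod>e<d. g e\<bar> \<le> 1"
  by (induction d) (auto simp: abs_mult intro!: mult_le_one)

lemma prod_tele: "(\<And>e. e < (d::nat) \<Longrightarrow> \<bar>f e\<bar> \<le> (1::real)) \<Longrightarrow> (\<And>e. e < d \<Longrightarrow> \<bar>g e\<bar> \<le> 1) \<Longrightarrow>
   \<bar>(\<Prod>e<d. f e) - (\<Prod>e<d. g e)\<bar> \<le> (\<Sum>e<d. \<bar>f e - g e\<bar>)"
proof (induction d)
  case 0 then show ?case by simp
next
  case (Suc d)
  let ?F = "\<Prod>e<d. f e" and ?G = "\<Prod>e<d. g e"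
  have F1: "\<bar>?F\<bar> \<le> 1" using Suc.prems by (intro prod_abs_le1) auto
  have IH: "\<bar>?F - ?G\<bar> \<le> (\<Sum>e<d. \<bar>f e - g e\<bar>)" using Suc by auto
  have g1: "\<bar>g d\<bar> \<le> 1" using Suc.prems by auto
  have "\<bar>?F * f d - ?G * g d\<bar> = \<bar>?F * (f d - g d) + (?F - ?G) * g d\<bar>" by (simp add: algebra_simps)
  also have "\<dots> \<le> \<bar>?F\<bar> * \<bar>f d - g d\<bar> + \<bar>?F - ?G\<bar> * \<bar>g d\<bar>" by (metis abs_mult abs_triangle_ineq)
  also have "\<dots> \<le> 1 * \<bar>f d - g d\<bar> + \<bar>?F - ?G\<bar> * 1"
    by (intro add_mono mult_mono) (use F1 g1 in auto)
  also have "\<dots> \<le> \<bar>f d - g d\<bar> + (\<Sum>e<d. \<bar>f e - g e\<bar>)" using IH by simp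
  finally show ?case by (simp add: add.commute)
qed


lemma massP_img: "inj_on lab L \<Longrightarrow> A \<subseteq> L \<Longrightarrow> massP P x (lab ` A) = (\<Sum>w\<in>A. P x (lab w))"
  by (simp add: massP_def sum.reindex inj_on_subset)

lemma children_mass:
  assumes inj: "inj_on lab (leaves k m)" and fin: "finite (leaves k m)" and lv: "length v < m"
  shows "(\<Sum>j<k. massP P x (subtree_labels k m lab (v@[j]))) = massP P x (subtree_labels k m lab v)"
proof -
  define A where "A = {w\<in>leaves k m. take (length v) w = v}"
  have Aj: "{w\<in>leaves k m. take (length (v@[j])) w = v@[j]} = {w. w\<in>A \<and> w ! length v = j}" for j
  proof -
    have "take (Suc (length v)) w = take (length v) w @ [w ! length v]" if "w \<in> leaves k m" for w
      using that lv by (intro take_Suc_conv_app_nth) (simp add: leaves_def)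
    then show ?thesis unfolding A_def by auto
  qed
  have AL: "A \<subseteq> leaves k m" unfolding A_def by auto
  have fA: "finite A" using fin AL finite_subset by blast
  have g: "(\<lambda>w. w ! length v) ` A \<subseteq> {..<k}"
  proof
    fix c assume "c \<in> (\<lambda>w. w ! length v) ` A"
    then obtain w where w: "w \<in> A" "c = w ! length v" by auto
    then have "length w = m" "\<forall>c\<in>set w. c < k" using AL by (auto simp: leaves_def)
    then show "c \<in> {..<k}" using w lv by (auto intro: nth_mem)
  qed
  have "(\<Sum>j<k. massP P x (subtree_labels k m lab (v@[j]))) = (\<Sum>j<k. \<Sum>w\<in>{w. w\<in>A \<and> w ! length v = j}. P x (lab w))"
    unfolding subtree_labels_def Aj using inj AL by (intro sum.cong refl massP_img) auto
  also have "\<dots> = (\<Sum>w\<in>A. P x (lab w))" by (rule sum.group[OF fA _ g]) simp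
  also have "\<dots> = massP P x (subtree_labels k m lab v)"
    unfolding subtree_labels_def A_def[symmetric] using inj AL by (simp add: massP_img)
  finally show ?thesis .
qed


theorem theorem2:
  fixes t m k n :: nat
    and lab :: "nat list \<Rightarrow> nat"
    and P :: "'x \<Rightarrow> nat \<Rightarrow> real"
    and D :: "'x \<Rightarrow> nat list \<Rightarrow> nat \<Rightarrow> real"
    and r :: "nat list \<Rightarrow> nat \<Rightarrow> 'x \<Rightarrow> real"
    and x :: 'x and y :: nat
  assumes "t \<ge> 1" and "k = 2 ^ t" and "m \<ge> 1" and "n = k ^ m"
    and "bij_betw lab (leaves k m) {1..n}"
    and "\<forall>x. (\<forall>y\<in>{1..n}. P x y \<ge> 0) \<and> (\<Sum>y\<in>{1..n}. P x y) = 1"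
    and "\<forall>x. \<forall>v\<in>internal_nodes k m. (\<forall>j<k. D x v j \<ge> 0) \<and> (\<Sum>j<k. D x v j) = 1"
    and "\<forall>v\<in>internal_nodes k m. \<forall>i\<in>{1..<k}. \<forall>x. 0 \<le> r v i x \<and> r v i x \<le> 1"
    and "y \<in> {1..n}"
  shows "(est t m lab r x y - P x y) ^ 2
           \<le> 4 * (real m) ^ 2 * ((real k - 1) / real k) ^ 2 * eps_sq t m lab P D r x y"
proof -
  note t1 = assms(1) and kt = assms(2) and m1 = assms(3) and bij = assms(5)
    and Pd = assms(6) and Dd = assms(7) and rb = assms(8) and yn = assms(9)
  have k2: "k \<ge> 2" using t1 kt by (metis one_le_numeral power_increasing power_one_right)
  have inj: "inj_on lab (leaves k m)" and img: "lab ` leaves k m = {1..n}"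
    using bij by (auto simp: bij_betw_def)
  have finL: "finite (leaves k m)" using img inj finite_imageD by (metis finite_atLeastAtMost)
  define w where "w = leaf_of k m lab y"
  have wL: "w \<in> leaves k m" unfolding w_def leaf_of_def using img yn by (auto intro: inv_into_into)
  have lw: "lab w = y" unfolding w_def leaf_of_def using img yn by (auto intro: f_inv_into_f)
  have wlen: "length w = m" and wset: "\<forall>c\<in>set w. c < k" using wL by (auto simp: leaves_def)
  have Pnn: "\<And>u. u \<in> leaves k m \<Longrightarrow> P x (lab u) \<ge> 0" using Pd img by auto
  define M where "M d = massP P x (subtree_labels k m lab (take d w))" for d
  define q where "q d j = node_cond k m lab P D x (take d w) j" for d j
  have Mnn: "M d \<ge> 0" for d
    unfolding M_def subtree_labels_def using Pnn
    by (subst massP_img[OF inj]) (auto intro: sum_nonneg)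
  have Mmono: "M (Suc d) \<le> M d" for d
  proof -
    have sub: "{u \<in> leaves k m. take (length (take (Suc d) w)) u = take (Suc d) w}
       \<subseteq> {u \<in> leaves k m. take (length (take d w)) u = take d w}"
    proof clarify
      fix u assume u: "u \<in> leaves k m" "take (length (take (Suc d) w)) u = take (Suc d) w"
      then have "length u = m" by (auto simp: leaves_def)
      then have "take d (take (length (take (Suc d) w)) u) = take (length (take d w)) u"
        using wlen by (auto simp: min_def)
      with u show "take (length (take d w)) u = take d w" by (simp add: min_def)
    qed
    let ?A = "{u \<in> leaves k m. take (length (take (Suc d) w)) u = take (Suc d) w}"
    let ?B = "{u \<in> leaves k m. take (length (take d w)) u = take d w}"
    have "M (Suc d) = (\<Sum>u\<in>?A. P x (lab u))"
      unfolding M_def subtree_labels_def by (rule massP_img[OF inj]) auto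
    also have "\<dots> \<le> (\<Sum>u\<in>?B. P x (lab u))"
      by (rule sum_mono2) (use sub Pnn finL in auto)
    also have "\<dots> = M d"
      unfolding M_def subtree_labels_def by (rule massP_img[OF inj, symmetric]) auto
    finally show ?thesis .
  qed
  have vint: "take d w \<in> internal_nodes k m" if "d < m" for d
    using that wlen wset by (auto simp: internal_nodes_def dest: in_set_takeD)
  have takeS: "take d w @ [w ! d] = take (Suc d) w" if "d < m" for d
    using that wlen by (simp add: take_Suc_conv_app_nth)
  have qsum: "(\<Sum>j<k. q d j) = 1" if "d < m" for d
  proof (cases "M d > 0")
    case True
    have "(\<Sum>j<k. q d j) = (\<Sum>j<k. massP P x (subtree_labels k m lab (take d w @ [j]))) / M d"
      unfolding q_def node_cond_def using True by (simp add: M_def sum_divide_distrib)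
    also have "\<dots> = 1" using children_mass[OF inj finL, of "take d w" P x] that wlen True
      by (simp add: M_def)
    finally show ?thesis .
  next
    case False
    then show ?thesis unfolding q_def node_cond_def using Dd vint[OF that] by (simp add: M_def)
  qed
  have qb: "\<bar>q d (w ! d)\<bar> \<le> 1" if "d < m" for d
  proof (cases "M d > 0")
    case True
    then have "q d (w ! d) = M (Suc d) / M d"
      unfolding q_def node_cond_def using takeS[OF that] by (simp add: M_def)
    then show ?thesis using True Mmono[of d] Mnn[of "Suc d"] by simp
  next
    case False
    have wd: "w ! d < k" using wset wlen that by auto
    have D: "\<forall>j<k. D x (take d w) j \<ge> 0" "(\<Sum>j<k. D x (take d w) j) = 1" using Dd vint[OF that] by auto
    have "D x (take d w) (w ! d) \<le> (\<Sum>j<k. D x (take d w) j)"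
      using D wd by (intro member_le_sum) auto
    with D have "D x (take d w) (w ! d) \<le> 1" by simp
    then show ?thesis unfolding q_def node_cond_def using False D wd by (simp add: M_def)
  qed
  have Ptele: "d \<le> m \<Longrightarrow> (\<Prod>e<d. q e (w ! e)) = M d" for d
  proof (induction d)
    case 0
    have "subtree_labels k m lab [] = {1..n}" unfolding subtree_labels_def using img by simp
    then show ?case using Pd by (simp add: M_def massP_def)
  next
    case (Suc d)
    then have dm: "d < m" by simp
    show ?case
    proof (cases "M d > 0")
      case True
      then have "q d (w ! d) = M (Suc d) / M d"
        unfolding q_def node_cond_def using takeS[OF dm] by (simp add: M_def)
      then show ?thesis using Suc True by simp
    next
      case False
      then have "M d = 0" using Mnn[of d] by simp
      moreover then have "M (Suc d) = 0" using Mmono[of d] Mnn[of "Suc d"] by simp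
      ultimately show ?thesis using Suc by simp
    qed
  qed
  have Mm: "M m = P x y"
  proof -
    have "{u \<in> leaves k m. take m u = w} = {w}" using wL wlen by (auto simp: leaves_def)
    then show ?thesis unfolding M_def subtree_labels_def using wlen lw by (simp add: massP_def)
  qed
  have Pprod: "P x y = (\<Prod>d<m. q d (w ! d))" using Ptele[of m] Mm by simp
  have injt: "inj_on (\<lambda>d. take d w) {..<m}"
  proof (rule inj_onI)
    fix a b assume ab: "a \<in> {..<m}" "b \<in> {..<m}" "take a w = take b w"
    then have "length (take a w) = length (take b w)" by simp
    then show "a = b" using wlen ab(1,2) by simp
  qed
  have pathn: "path_nodes k m lab y = (\<lambda>d. take d w) ` {..<m}" unfolding path_nodes_def w_def ..
  have cidx: "child_idx k m lab y (take d w) = w ! d" if "d < m" for d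
    unfolding child_idx_def w_def[symmetric] using that wlen by simp
  define Qe where "Qe d = node_est t r x (take d w) (w ! d)" for d
  have estprod: "est t m lab r x y = (\<Prod>d<m. Qe d)"
    unfolding est_def kt[symmetric] pathn using injt cidx by (simp add: prod.reindex Qe_def)
  define pp where "pp d i = (\<Sum>j'<k. Cmat t i j' * q d j')" for d i
  define a where "a d i = r (take d w) i x - node_cond_set k m lab P D x (take d w) (Yset t i)" for d i
  define E where "E d = (\<Sum>i\<in>{1..<k}. (a d i)^2)" for d
  have ncs: "node_cond_set k m lab P D x (take d w) (Yset t i) = pp d i" for d i
  proof -
    have Y: "Yset t i = {j \<in> {..<k}. Cmat t i j = 1}" unfolding Yset_def kt by auto
    have "node_cond_set k m lab P D x (take d w) (Yset t i) = (\<Sum>j<k. if Cmat t i j = 1 then q d j else 0)"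
      unfolding node_cond_set_def Y q_def by (rule sum.inter_filter) simp
    also have "\<dots> = pp d i" unfolding pp_def
      by (rule sum.cong) (use Cmat01[of t i] in auto)
    finally show ?thesis .
  qed
  have pp0: "pp d 0 = 1" if "d < m" for d using qsum[OF that] by (simp add: pp_def Cmat_row0)
  have wdk: "w ! d < k" if "d < m" for d using wset wlen that by auto
  have regb: "0 \<le> reg r (take d w) i x \<and> reg r (take d w) i x \<le> 1" if "d < m" "i < k" for d i
    using rb vint[OF that(1)] that(2) by (cases "i = 0") (auto simp: reg_def)
  have Qe_FF: "Qe d = FF t (\<lambda>i. reg r (take d w) i x) (w ! d)" for d
    by (simp add: Qe_def node_est_def FF_def)
  have q_FF: "q d (w ! d) = FF t (pp d) (w ! d)" if "d < m" for d
    unfolding pp_def kt using FF_inv[of "w ! d" t "q d"] wdk[OF that] qsum[OF that] kt by simp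
  define De where "De d = Qe d - q d (w ! d)" for d
  have De_eq: "De d = 2 / real k * (\<Sum>i\<in>{1..<k}. hh t i (w ! d) * a d i)" if "d < m" for d
  proof -
    have "De d = 2 / real k * (\<Sum>i<k. hh t i (w ! d) * (reg r (take d w) i x - pp d i))"
      unfolding De_def Qe_FF q_FF[OF that] FF_diff kt by simp
    also have "(\<Sum>i<k. hh t i (w ! d) * (reg r (take d w) i x - pp d i)) = (\<Sum>i\<in>{0..<k}. hh t i (w ! d) * (reg r (take d w) i x - pp d i))"
      by (simp add: atLeast0LessThan)
    also have "\<dots> = (\<Sum>i\<in>{1..<k}. hh t i (w ! d) * (reg r (take d w) i x - pp d i))"
      using k2 pp0[OF that] by (subst sum.atLeast_Suc_lessThan) (auto simp: reg_def)
    also have "\<dots> = (\<Sum>i\<in>{1..<k}. hh t i (w ! d) * a d i)"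
      by (rule sum.cong) (auto simp: reg_def a_def ncs)
    finally show ?thesis .
  qed
  have hh1: "\<bar>hh t i j\<bar> = 1" for i j using Cmat01[of t i j] by (auto simp: hh_def)
  have De_sq: "(De d)^2 \<le> (2 / real k)^2 * (real k - 1) * E d" if "d < m" for d
  proof -
    have Db: "\<bar>De d\<bar> \<le> 2 / real k * (\<Sum>i\<in>{1..<k}. \<bar>a d i\<bar>)"
    proof -
      have "\<bar>\<Sum>i\<in>{1..<k}. hh t i (w ! d) * a d i\<bar> \<le> (\<Sum>i\<in>{1..<k}. \<bar>hh t i (w ! d) * a d i\<bar>)"
        by (rule sum_abs)
      also have "\<dots> = (\<Sum>i\<in>{1..<k}. \<bar>a d i\<bar>)" by (simp add: abs_mult hh1)
      finally show ?thesis unfolding De_eq[OF that] using k2 by (simp add: abs_mult divide_right_mono)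
    qed
    have "(De d)^2 \<le> (2 / real k * (\<Sum>i\<in>{1..<k}. \<bar>a d i\<bar>))^2"
      using power_mono[OF Db abs_ge_zero, of 2] by simp
    also have "\<dots> = (2 / real k)^2 * (\<Sum>i\<in>{1..<k}. \<bar>a d i\<bar>)^2" by (rule power_mult_distrib)
    also have "\<dots> \<le> (2 / real k)^2 * (real (card {1..<k}) * (\<Sum>i\<in>{1..<k}. \<bar>a d i\<bar>^2))"
      by (intro mult_left_mono cs) auto
    also have "\<dots> = (2 / real k)^2 * (real k - 1) * E d"
      using k2 by (simp add: E_def of_nat_diff)
    finally show ?thesis .
  qed
  have Qeb: "\<bar>Qe d\<bar> \<le> 1" if "d < m" for d
  proof -
    define S where "S = (\<Sum>i<2 ^ t. Cmat t i (w ! d) * reg r (take d w) i x + (1 - Cmat t i (w ! d)) * (1 - reg r (take d w) i x))"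
    have tb: "0 \<le> Cmat t i (w ! d) * reg r (take d w) i x + (1 - Cmat t i (w ! d)) * (1 - reg r (take d w) i x)
       \<and> Cmat t i (w ! d) * reg r (take d w) i x + (1 - Cmat t i (w ! d)) * (1 - reg r (take d w) i x) \<le> 1"
      if "i < k" for i
      using regb[OF \<open>d < m\<close> that] Cmat01[of t i "w ! d"] by auto
    have S0: "0 \<le> S" unfolding S_def using tb kt by (intro sum_nonneg) auto
    have "S \<le> (\<Sum>i<(2::nat) ^ t. (1::real))" unfolding S_def using tb kt by (intro sum_mono) auto
    then have Sk: "S \<le> real k" using kt by simp
    have "Qe d = 2 / real k * S - 1" unfolding Qe_def node_est_def S_def kt by simp
    moreover have "2 / real k * S \<le> 2" using Sk k2 by (simp add: field_simps)
    moreover have "0 \<le> 2 / real k * S" using S0 by simp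
    ultimately show ?thesis by simp
  qed
  have tele: "\<bar>est t m lab r x y - P x y\<bar> \<le> (\<Sum>d<m. \<bar>De d\<bar>)"
    unfolding estprod Pprod De_def by (rule prod_tele) (auto simp: Qeb qb)
  have "(est t m lab r x y - P x y)^2 \<le> (\<Sum>d<m. \<bar>De d\<bar>)^2"
    using power_mono[OF tele abs_ge_zero, of 2] by simp
  also have "\<dots> \<le> real m * (\<Sum>d<m. \<bar>De d\<bar>^2)" using cs[of "{..<m}" "\<lambda>d. \<bar>De d\<bar>"] by simp
  also have "\<dots> \<le> real m * (\<Sum>d<m. (2 / real k)^2 * (real k - 1) * E d)"
    by (intro mult_left_mono sum_mono) (auto simp: De_sq)
  also have "\<dots> = real m * ((2 / real k)^2 * (real k - 1)) * (\<Sum>d<m. E d)"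
    by (simp add: sum_distrib_left sum_distrib_right mult_ac)
  finally have L: "(est t m lab r x y - P x y)^2 \<le> real m * ((2 / real k)^2 * (real k - 1)) * (\<Sum>d<m. E d)" .
  have eps: "eps_sq t m lab P D r x y = 1 / ((real k - 1) * real m) * (\<Sum>d<m. E d)"
    unfolding eps_sq_def kt[symmetric] pathn using injt k2
    by (simp add: sum.reindex E_def a_def of_nat_diff)
  have "real m * ((2 / real k)^2 * (real k - 1)) * (\<Sum>d<m. E d)
      = 4 * (real m) ^ 2 * ((real k - 1) / real k) ^ 2 * (1 / ((real k - 1) * real m) * (\<Sum>d<m. E d))"
    using k2 m1 by (simp add: field_simps power2_eq_square)
  with L eps show ?thesis by simp
qed

end
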